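(* Let $r\geq2$ and $\ell\geq1$ be integers and $c>0$. Let $\mathcal{H}$ be an $\ell$-partite $\ell$-uniform hypergraph with parts $V_1,\dots,V_\ell$, each of size $n$, having at least $\ell c n^\ell$ edges. Let $\varphi$ be an $r$-colouring of the edges of the complete graphs on $V_1,\dots,V_\ell$ (i.e. of all pairs inside each $V_i$). Then there exist an integer $m\geq \left(\min\{\frac c2,\frac{1}{2r\log r}\}\right)^\ell\log n$ and sets $S_i\subseteq V_i$ with $|S_i|=m$ for $i\in[\ell]$ such that $\varphi$ is constant on the pairs inside each $S_i$, and $\mathcal{H}$ covers the complete $\ell$-partite graph with parts $S_1,\dots,S_\ell$.
   Context: Edges of $\mathcal{H}$ are $\ell$-tuples $(v_1,\dots,v_\ell)$ with $v_i\in V_i$. Let $K_2(\mathcal{H})$ be the set of vertex pairs contained in some edge of $\mathcal{H}$. For a complete $\ell$-partite graph $F$ with parts of size $m$, we say $\mathcal{H}$ covers $F$ if every edge of $F$ belongs to $K_2(\mathcal{H})$ and there are $m$ pairwise disjoint edges of $\mathcal{H}$ each contained in $V(F)$. *)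

theory Defs
  imports Complex_Main
begin

text \<open>An l-partite l-uniform hypergraph with parts V 0, ..., V (l-1) (pairwise disjoint):
  its edges are tuples, represented as lists xs of length l with xs ! i \<in> V i.\<close>
definition partite_hypergraph :: "nat \<Rightarrow> (nat \<Rightarrow> 'a set) \<Rightarrow> 'a list set \<Rightarrow> bool" where
  "partite_hypergraph l V H \<longleftrightarrow>
     (\<forall>i<l. \<forall>j<l. i \<noteq> j \<longrightarrow> V i \<inter> V j = {}) \<and>
     H \<subseteq> {xs. length xs = l \<and> (\<forall>i<l. xs ! i \<in> V i)}"

definition K2 :: "'a list set \<Rightarrow> 'a set set" where
  "K2 H = {{x, y} | x y. x \<noteq> y \<and> (\<exists>e\<in>H. x \<in> set e \<and> y \<in> set e)}"

definition covers :: "'a list set \<Rightarrow> nat \<Rightarrow> (nat \<Rightarrow> 'a set) \<Rightarrow> nat \<Rightarrow> bool" where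
  "covers H l S m \<longleftrightarrow>
     (\<forall>i<l. \<forall>j<l. i \<noteq> j \<longrightarrow> (\<forall>x\<in>S i. \<forall>y\<in>S j. {x, y} \<in> K2 H)) \<and>
     (\<exists>D \<subseteq> H. card D = m \<and> (\<forall>e\<in>D. set e \<subseteq> (\<Union>i<l. S i)) \<and>
        pairwise (\<lambda>e f. set e \<inter> set f = {}) D)"

end

theory Submission
  imports Defs
begin

lemma ramsey_aux:
  fixes r :: nat and \<phi> :: "'a set \<Rightarrow> nat"
  assumes r2: "r \<ge> 2"
  shows "\<forall>t X. (\<Sum>i<r. t i) = S \<longrightarrow> finite X \<longrightarrow> card X \<ge> r ^ S \<longrightarrow>
     (\<forall>x\<in>X. \<forall>y\<in>X. x \<noteq> y \<longrightarrow> \<phi> {x, y} < r) \<longrightarrow>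
     (\<exists>k<r. \<exists>T\<subseteq>X. card T = t k + 1 \<and> (\<forall>x\<in>T. \<forall>y\<in>T. x \<noteq> y \<longrightarrow> \<phi> {x, y} = k))"
proof (induction S)
  case 0
  show ?case
  proof (intro allI impI)
    fix t :: "nat \<Rightarrow> nat" and X :: "'a set"
    assume h: "(\<Sum>i<r. t i) = 0" "finite X" "r ^ 0 \<le> card X"
    then have "X \<noteq> {}" by auto
    then obtain v where v: "v \<in> X" by blast
    have "t 0 = 0" using h(1) r2 by simp
    then show "\<exists>k<r. \<exists>T\<subseteq>X. card T = t k + 1 \<and> (\<forall>x\<in>T. \<forall>y\<in>T. x \<noteq> y \<longrightarrow> \<phi> {x, y} = k)"
      using v r2 by (intro exI[of _ 0] conjI exI[of _ "{v}"]) auto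
  qed
next
  case (Suc S)
  show ?case
  proof (intro allI impI)
    fix t :: "nat \<Rightarrow> nat" and X :: "'a set"
    assume h: "(\<Sum>i<r. t i) = Suc S" "finite X" "r ^ Suc S \<le> card X"
      and col: "\<forall>x\<in>X. \<forall>y\<in>X. x \<noteq> y \<longrightarrow> \<phi> {x, y} < r"
    have "r ^ Suc S \<ge> 1" using r2 by simp
    then have "X \<noteq> {}" using h by auto
    then obtain v where v: "v \<in> X" by blast
    define C where "C k = {w \<in> X - {v}. \<phi> {v, w} = k}" for k
    have "\<exists>k0<r. card (C k0) \<ge> r ^ S"
    proof (rule ccontr)
      assume "\<not> ?thesis"
      then have lt: "\<forall>k<r. card (C k) \<le> r ^ S - 1" by force
      have "X - {v} \<subseteq> (\<Union>k<r. C k)"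
      proof
        fix w assume w: "w \<in> X - {v}"
        have "w \<in> X" "v \<noteq> w" using w by auto
        then have "\<phi> {v, w} < r" using col v by blast
        then show "w \<in> (\<Union>k<r. C k)" using w unfolding C_def by blast
      qed
      then have "card (X - {v}) \<le> card (\<Union>k<r. C k)"
        using h(2) unfolding C_def by (intro card_mono) auto
      also have "\<dots> \<le> (\<Sum>k<r. card (C k))" by (rule card_UN_le) simp
      also have "\<dots> \<le> (\<Sum>k<r. r ^ S - 1)" using lt by (intro sum_mono) auto
      also have "\<dots> = r * (r ^ S - 1)" by simp
      finally have a: "card X - 1 \<le> r * (r ^ S - 1)" using v h(2) by simp
      have "r ^ S \<ge> 1" using r2 by simp
      then have "r * (r ^ S - 1) = r ^ Suc S - r" by (simp add: algebra_simps right_diff_distrib')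
      moreover have "r ^ Suc S \<ge> r" using \<open>r ^ S \<ge> 1\<close> by simp
      ultimately have "r ^ Suc S - r + r = r ^ Suc S" by simp
      moreover have "card X > 0" using v h(2) card_gt_0_iff by blast
      then have "card X - 1 + 1 = card X" by simp
      ultimately show False using a h(3) r2 \<open>r * (r ^ S - 1) = r ^ Suc S - r\<close> by linarith
    qed
    then obtain k0 where k0: "k0 < r" "card (C k0) \<ge> r ^ S" by blast
    have fC: "finite (C k0)" using h(2) unfolding C_def by auto
    have CX: "C k0 \<subseteq> X" "v \<notin> C k0" unfolding C_def by auto
    show "\<exists>k<r. \<exists>T\<subseteq>X. card T = t k + 1 \<and> (\<forall>x\<in>T. \<forall>y\<in>T. x \<noteq> y \<longrightarrow> \<phi> {x, y} = k)"
    proof (cases "t k0 = 0")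
      case True
      then show ?thesis using v k0 by (intro exI[of _ k0] conjI exI[of _ "{v}"]) auto
    next
      case False
      define t' where "t' = t(k0 := t k0 - 1)"
      have s1: "(\<Sum>i<r. t i) = t k0 + (\<Sum>i\<in>{..<r} - {k0}. t i)"
        using k0 by (simp add: sum.remove)
      have s2: "(\<Sum>i<r. t' i) = t' k0 + (\<Sum>i\<in>{..<r} - {k0}. t' i)"
        using k0 by (simp add: sum.remove)
      have s3: "(\<Sum>i\<in>{..<r} - {k0}. t' i) = (\<Sum>i\<in>{..<r} - {k0}. t i)"
        unfolding t'_def by (intro sum.cong) auto
      have st: "(\<Sum>i<r. t' i) = S" using s1 s2 s3 h(1) False unfolding t'_def by simp
      have col': "\<forall>x\<in>C k0. \<forall>y\<in>C k0. x \<noteq> y \<longrightarrow> \<phi> {x, y} < r" using col CX(1) by blast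
      note H = spec[OF spec[OF Suc.IH, of t'], of "C k0"]
      obtain k T where kT: "k < r" "T \<subseteq> C k0" "card T = t' k + 1"
        "\<forall>x\<in>T. \<forall>y\<in>T. x \<noteq> y \<longrightarrow> \<phi> {x, y} = k"
        using mp[OF mp[OF mp[OF mp[OF H st] fC] k0(2)] col'] by blast
      show ?thesis
      proof (cases "k = k0")
        case True
        have fT: "finite T" using kT(2) fC finite_subset by blast
        have vT: "v \<notin> T" using kT(2) CX(2) by blast
        have "card (insert v T) = t k0 + 1" using fT vT kT(3) True False unfolding t'_def by simp
        moreover have "\<forall>x\<in>insert v T. \<forall>y\<in>insert v T. x \<noteq> y \<longrightarrow> \<phi> {x, y} = k0"
          using kT(2,4) True unfolding C_def by (auto simp: insert_commute)
        ultimately show ?thesis using k0 v kT(2) CX(1)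
          by (intro exI[of _ k0] conjI exI[of _ "insert v T"]) auto
      next
        case False
        then show ?thesis using kT CX(1) unfolding t'_def
          by (intro exI[of _ k] conjI exI[of _ T]) auto
      qed
    qed
  qed
qed

lemma ramsey:
  fixes r q :: nat and \<phi> :: "'a set \<Rightarrow> nat"
  assumes "r \<ge> 2" "finite X" "card X \<ge> r ^ (r * q)"
    "\<forall>x\<in>X. \<forall>y\<in>X. x \<noteq> y \<longrightarrow> \<phi> {x, y} < r"
  shows "\<exists>T\<subseteq>X. card T = q + 1 \<and> (\<exists>k. \<forall>x\<in>T. \<forall>y\<in>T. x \<noteq> y \<longrightarrow> \<phi> {x, y} = k)"
proof -
  have s: "(\<Sum>i<r. (\<lambda>_. q) i) = r * q" by simp
  note H = spec[OF spec[OF ramsey_aux[OF assms(1), of "r * q" \<phi>], of "\<lambda>_. q"], of X]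
  have "\<exists>k<r. \<exists>T\<subseteq>X. card T = q + 1 \<and> (\<forall>x\<in>T. \<forall>y\<in>T. x \<noteq> y \<longrightarrow> \<phi> {x, y} = k)"
    using mp[OF mp[OF mp[OF mp[OF H s] assms(2)] assms(3)] assms(4)] by simp
  then show ?thesis by blast
qed

lemma card_filter_sum: "finite A \<Longrightarrow> card {x\<in>A. P x} = (\<Sum>x\<in>A. if P x then 1 else 0)"
  by (simp add: sum.If_cases Int_def conj_commute)

lemma card_swap:
  assumes "finite R" "finite X"
  shows "(\<Sum>a\<in>R. card (X \<inter> L a)) = (\<Sum>v\<in>X. card {a\<in>R. v \<in> L a})"
proof -
  have "(\<Sum>a\<in>R. card (X \<inter> L a)) = (\<Sum>a\<in>R. \<Sum>v\<in>X. if v \<in> L a then 1 else 0)"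
    using assms card_filter_sum[of X "\<lambda>v. v \<in> L _"] by (intro sum.cong) (auto simp: Int_def)
  also have "\<dots> = (\<Sum>v\<in>X. \<Sum>a\<in>R. if v \<in> L a then 1 else 0)" by (rule sum.swap)
  also have "\<dots> = (\<Sum>v\<in>X. card {a\<in>R. v \<in> L a})"
    using assms card_filter_sum[of R] by (intro sum.cong) auto
  finally show ?thesis .
qed

lemma select:
  fixes I :: "'b set" and W :: "'a set" and L :: "'b \<Rightarrow> 'a set" and c :: real
  assumes fI: "finite I" and cI: "card I = M" and fW: "finite W" and cW: "card W = n"
    and LW: "\<forall>a\<in>I. L a \<subseteq> W" and cL: "\<forall>a\<in>I. real (card (L a)) \<ge> c * n"
    and c0: "c > 0" and sM: "s \<le> M" and sc: "real s - 1 \<le> c / 2 * M" and M0: "M > 0"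
  shows "\<exists>A\<subseteq>I. card A = s \<and> (\<exists>X\<subseteq>W. (\<forall>a\<in>A. X \<subseteq> L a) \<and> real (card X) \<ge> (c/4)^(s+1) * n)"
proof -
  define d where "d v = card {a\<in>I. v \<in> L a}" for v
  define X0 where "X0 = {v\<in>W. real (d v) \<ge> 3*c/4 * M}"
  have X0W: "X0 \<subseteq> W" unfolding X0_def by auto
  have fX0: "finite X0" using fW X0W finite_subset by blast
  have dM: "d v \<le> M" for v unfolding d_def using cI fI by (metis (no_types, lifting) card_mono mem_Collect_eq subsetI)
  have "(\<Sum>a\<in>I. card (W \<inter> L a)) = (\<Sum>v\<in>W. d v)" unfolding d_def by (rule card_swap[OF fI fW])
  moreover have "(\<Sum>a\<in>I. card (W \<inter> L a)) = (\<Sum>a\<in>I. card (L a))"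
    using LW by (intro sum.cong) (auto simp: Int_absorb1)
  ultimately have "(\<Sum>v\<in>W. d v) = (\<Sum>a\<in>I. card (L a))" by simp
  then have "real (\<Sum>v\<in>W. d v) = real (\<Sum>a\<in>I. card (L a))" by (rule arg_cong)
  then have sd: "(\<Sum>v\<in>W. real (d v)) = (\<Sum>a\<in>I. real (card (L a)))"
    by (simp only: of_nat_sum)
  have "(\<Sum>a\<in>I. real (card (L a))) \<ge> (\<Sum>a\<in>I. c * n)" using cL by (intro sum_mono) auto
  then have sd1: "(\<Sum>v\<in>W. real (d v)) \<ge> c * n * M" using sd cI by (simp add: mult.commute mult.left_commute)
  have "(\<Sum>v\<in>W. real (d v)) \<le> (\<Sum>v\<in>W. (if v \<in> X0 then real M else 0) + 3*c/4 * M)"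
  proof (intro sum_mono)
    fix v assume "v \<in> W"
    have "real (d v) \<le> real M" using dM[of v] by simp
    moreover have "0 \<le> 3*c/4 * M" using c0 by simp
    ultimately show "real (d v) \<le> (if v \<in> X0 then real M else 0) + 3*c/4 * M"
      using \<open>v \<in> W\<close> unfolding X0_def by auto
  qed
  also have "\<dots> = (\<Sum>v\<in>W. if v \<in> X0 then real M else 0) + n * (3*c/4 * M)"
    using cW by (simp add: sum.distrib)
  also have "(\<Sum>v\<in>W. if v \<in> X0 then real M else 0) = card X0 * real M"
  proof -
    have "(\<Sum>v\<in>W. if v \<in> X0 then real M else 0) = (\<Sum>v\<in>{v\<in>W. v \<in> X0}. real M)"
      using sum.inter_filter[OF fW, of "\<lambda>_. real M" "\<lambda>v. v \<in> X0"] by simp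
    also have "{v\<in>W. v \<in> X0} = X0" using X0W by auto
    finally show ?thesis by simp
  qed
  finally have "c * n * M \<le> card X0 * real M + n * (3*c/4 * M)" using sd1 by linarith
  then have "(c/4 * n) * M \<le> card X0 * M" by (simp add: algebra_simps)
  then have X0n: "c/4 * n \<le> card X0" using M0 by simp
  have it: "j \<le> s \<Longrightarrow> \<exists>A\<subseteq>I. card A = j \<and> (\<exists>X\<subseteq>X0. (\<forall>a\<in>A. X \<subseteq> L a) \<and> real (card X) \<ge> (c/4)^(j+1) * n)" for j
  proof (induction j)
    case 0
    show ?case using X0n by (intro exI[of _ "{}"] conjI exI[of _ X0]) auto
  next
    case (Suc j)
    then obtain A X where AX: "A \<subseteq> I" "card A = j" "X \<subseteq> X0" "\<forall>a\<in>A. X \<subseteq> L a"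
      "real (card X) \<ge> (c/4)^(j+1) * n" by auto
    define R where "R = I - A"
    have fA: "finite A" using AX(1) fI finite_subset by blast
    have fR: "finite R" unfolding R_def using fI by simp
    have cR: "card R = M - j" unfolding R_def using AX(1,2) fA cI by (simp add: card_Diff_subset)
    have fX: "finite X" using AX(3) fX0 finite_subset by blast
    have Rne: "R \<noteq> {}" using cR Suc.prems sM by auto
    have dv: "real (card {a\<in>R. v \<in> L a}) \<ge> 3*c/4 * M - j" if v: "v \<in> X" for v
    proof -
      have "{a\<in>I. v \<in> L a} \<subseteq> {a\<in>R. v \<in> L a} \<union> A" unfolding R_def by auto
      then have "d v \<le> card ({a\<in>R. v \<in> L a} \<union> A)" unfolding d_def using fR fA
        by (intro card_mono) auto
      also have "\<dots> \<le> card {a\<in>R. v \<in> L a} + card A" by (rule card_Un_le)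
      finally have "real (d v) \<le> card {a\<in>R. v \<in> L a} + j" using AX(2) by linarith
      moreover have "real (d v) \<ge> 3*c/4 * M" using v AX(3) unfolding X0_def by auto
      ultimately show ?thesis by linarith
    qed
    have jc: "real j \<le> c/2 * M" using Suc.prems sc by simp
    have "(\<Sum>a\<in>R. real (card (X \<inter> L a))) = (\<Sum>v\<in>X. real (card {a\<in>R. v \<in> L a}))"
      using arg_cong[OF card_swap[OF fR fX, of L], of real] by simp
    also have "\<dots> \<ge> (\<Sum>v\<in>X. 3*c/4 * M - j)" using dv by (intro sum_mono) auto
    finally have "(\<Sum>a\<in>R. real (card (X \<inter> L a))) \<ge> card X * (3*c/4 * M - j)" by simp
    moreover have "card X * (3*c/4 * M - j) \<ge> card X * (c/4 * card R)"
    proof (rule mult_left_mono)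
      have "real (card R) \<le> M" using cR by simp
      then have "c/4 * card R \<le> c/4 * M" using c0 by simp
      then show "c/4 * card R \<le> 3*c/4 * M - j" using jc by linarith
    qed simp
    ultimately have sumR: "(\<Sum>a\<in>R. real (card (X \<inter> L a))) \<ge> card R * (c/4 * card X)" by (simp add: algebra_simps)
    have "\<exists>a\<in>R. real (card (X \<inter> L a)) \<ge> c/4 * card X"
    proof (rule ccontr)
      assume "\<not> ?thesis"
      then have "\<forall>a\<in>R. real (card (X \<inter> L a)) < c/4 * card X" by auto
      then have "(\<Sum>a\<in>R. real (card (X \<inter> L a))) < (\<Sum>a\<in>R. c/4 * card X)"
        using fR Rne by (intro sum_strict_mono) auto
      then show False using sumR by simp
    qed
    then obtain a where a: "a \<in> R" "real (card (X \<inter> L a)) \<ge> c/4 * card X" by blast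
    have "card (insert a A) = Suc j" using a(1) fA AX(2) unfolding R_def by simp
    moreover have "insert a A \<subseteq> I" using a(1) AX(1) unfolding R_def by auto
    moreover have "\<forall>b\<in>insert a A. X \<inter> L a \<subseteq> L b" using AX(4) by auto
    moreover have "real (card (X \<inter> L a)) \<ge> (c/4)^(Suc j+1) * n"
    proof -
      have "(c/4)^(Suc j+1) * n = c/4 * ((c/4)^(j+1) * n)" by simp
      also have "\<dots> \<le> c/4 * card X" using AX(5) c0 by (intro mult_left_mono) auto
      finally show ?thesis using a(2) by linarith
    qed
    moreover have "X \<inter> L a \<subseteq> X0" using AX(3) by auto
    ultimately show ?case by blast
  qed
  from it[OF order_refl] obtain A X where AX: "A \<subseteq> I" "card A = s" "X \<subseteq> X0"
    "\<forall>a\<in>A. X \<subseteq> L a" "real (card X) \<ge> (c/4)^(s+1) * n" by blast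
  have "X \<subseteq> W" using AX(3) X0W by (rule order_trans)
  then show ?thesis using AX(1,2,4,5) by blast
qed

lemma num_step:
  fixes r s n :: nat and b B c N :: real
  assumes r2: "r \<ge> 2" and c0: "0 < c" and c2: "c \<le> 1/2" and b0: "0 < b" and bc: "b \<le> c/2"
    and br: "2 * real r * ln (real r) * b \<le> 1" and B0: "0 < B" and Bb: "B \<le> b"
    and y1: "1 < b * B * N" and s1: "s \<ge> 1" and sy: "real s - 1 < b * B * N"
    and Nn: "N = ln (real n)" and n0: "n > 0"
  shows "real (r ^ (r * (s - 1))) \<le> (c/4) ^ (s + 1) * real n"
proof -
  have lnr: "ln (real r) > 0" using r2 by simp
  have N0: "N > 0" using y1 b0 B0 by (metis mult_pos_pos not_less mult_nonpos_nonneg zero_less_one order_less_trans mult_le_0_iff less_eq_real_def)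
  have rl0: "0 \<le> real r * ln (real r)" using lnr by simp
  have ss: "real (s - 1) = real s - 1" using s1 by simp
  have A1: "real r * real (s - 1) * ln (real r) \<le> B * N / 2"
  proof -
    have "real r * real (s - 1) * ln (real r) = (real r * ln (real r)) * real (s - 1)" by simp
    also have "\<dots> \<le> (real r * ln (real r)) * (b * B * N)" using ss sy rl0 by (intro mult_left_mono) auto
    also have "\<dots> = (2 * real r * ln (real r) * b) * (B * N) / 2" by simp
    also have "\<dots> \<le> 1 * (B * N) / 2" using br B0 N0 by (intro divide_right_mono mult_right_mono) auto
    finally show ?thesis by simp
  qed
  have L: "ln (4 / c) \<le> 2 / c"
  proof -
    have e: "ln (2 * (2 / c)) = ln 2 + ln (2 / c)" using c0 by (intro ln_mult_pos) auto
    have "2 * (2 / c) = 4 / c" by simp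
    then have "ln (4 / c) = ln 2 + ln (2 / c)" using e by metis
    also have "\<dots> \<le> 1 + (2 / c - 1)" using ln_2_less_1 ln_le_minus_one[of "2/c"] c0 by simp
    finally show ?thesis by simp
  qed
  have L0: "ln (4 / c) > 0" using c0 c2 by simp
  have bcB: "b * B * N * ln (4 / c) \<le> B * N"
  proof -
    have "b * B * N * ln (4 / c) \<le> (c/2) * B * N * (2 / c)"
      using bc L L0 B0 N0 b0 by (intro mult_mono) (auto intro: mult_mono)
    also have "\<dots> = B * N" using c0 by simp
    finally show ?thesis .
  qed
  have A2: "real (s + 1) * ln (4 / c) \<le> B * N + 4 / c"
  proof -
    have "real (s + 1) * ln (4 / c) \<le> (b * B * N + 2) * ln (4 / c)"
      using sy L0 by (intro mult_right_mono) auto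
    also have "\<dots> = b * B * N * ln (4 / c) + 2 * ln (4 / c)" by (simp add: algebra_simps)
    also have "\<dots> \<le> B * N + 4 / c" using bcB L by simp
    finally show ?thesis .
  qed
  have B4: "B \<le> 1/4" using Bb bc c2 by simp
  have "b * B \<le> (c/2) * (c/2)" using bc Bb b0 B0 by (intro mult_mono) auto
  then have "b * B * N \<le> (c/2) * (c/2) * N" using N0 by (intro mult_right_mono) auto
  then have Nc: "1 < c * c * N / 4" using y1 by simp
  have "4 / c \<le> 5/8 * N"
  proof -
    have "c * (c * N) > 4" using Nc by simp
    moreover have "c * (c * N) \<le> (1/2) * (c * N)" using c2 c0 N0 by (intro mult_right_mono) auto
    ultimately have "c * N > 8" by simp
    then have "c * (5/8 * N) \<ge> 4" by simp
    then show ?thesis using c0 by (simp add: field_simps)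
  qed
  then have key: "real r * real (s - 1) * ln (real r) + real (s + 1) * ln (4 / c) \<le> N"
  proof -
    have "B * N \<le> 1/4 * N" using B4 N0 by (intro mult_right_mono) auto
    then show ?thesis using A1 A2 \<open>4 / c \<le> 5/8 * N\<close> by linarith
  qed
  have pos1: "real (r ^ (r * (s - 1))) > 0" using r2 by simp
  have pos2: "(c/4) ^ (s + 1) * real n > 0" using c0 n0 by simp
  have "ln (real (r ^ (r * (s - 1)))) = real r * real (s - 1) * ln (real r)"
    using r2 by (simp add: ln_realpow)
  also have "\<dots> \<le> N - real (s + 1) * ln (4 / c)" using key by simp
  also have "\<dots> = ln ((c/4) ^ (s + 1) * real n)"
    using c0 n0 Nn by (simp add: ln_mult ln_realpow ln_div algebra_simps)
  finally show ?thesis using pos1 pos2 by simp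
qed

lemma num_base:
  fixes r s n :: nat and b c N :: real
  assumes r2: "r \<ge> 2" and c0: "0 < c" and b0: "0 < b" and bc: "b \<le> c/2"
    and br: "2 * real r * ln (real r) * b \<le> 1"
    and y1: "1 < b * N" and s1: "s \<ge> 1" and sy: "real s - 1 < b * N"
    and Nn: "N = ln (real n)" and n0: "n > 0"
  shows "real (r ^ (r * (s - 1))) \<le> c * real n"
proof -
  have lnr: "ln (real r) > 0" using r2 by simp
  have N0: "N > 0" using y1 b0 by (metis mult_le_0_iff not_less less_eq_real_def order_less_trans zero_less_one)
  have rl0: "0 \<le> real r * ln (real r)" using lnr by simp
  have ss: "real (s - 1) = real s - 1" using s1 by simp
  have A1: "real r * real (s - 1) * ln (real r) \<le> N / 2"
  proof -
    have "real r * real (s - 1) * ln (real r) = (real r * ln (real r)) * real (s - 1)" by simp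
    also have "\<dots> \<le> (real r * ln (real r)) * (b * N)" using ss sy rl0 by (intro mult_left_mono) auto
    also have "\<dots> = (2 * real r * ln (real r) * b) * N / 2" by simp
    also have "\<dots> \<le> 1 * N / 2" using br N0 by (intro divide_right_mono mult_right_mono) auto
    finally show ?thesis by simp
  qed
  have "ln (1 / c) \<le> 1 / c - 1" using ln_le_minus_one[of "1/c"] c0 by simp
  moreover have "2 / c \<le> N"
  proof -
    have "b * N \<le> c/2 * N" using bc N0 by (intro mult_right_mono) auto
    then have "c * N \<ge> 2" using y1 by simp
    then show ?thesis using c0 by (simp add: field_simps)
  qed
  ultimately have key: "real r * real (s - 1) * ln (real r) \<le> N + ln c"
    using A1 c0 by (simp add: ln_div)
  have pos1: "real (r ^ (r * (s - 1))) > 0" using r2 by simp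
  have "ln (real (r ^ (r * (s - 1)))) = real r * real (s - 1) * ln (real r)"
    using r2 by (simp add: ln_realpow)
  also have "\<dots> \<le> ln (c * real n)" using key c0 n0 Nn by (simp add: ln_mult)
  finally show ?thesis using pos1 c0 n0 by simp
qed

definition tup :: "nat \<Rightarrow> (nat \<Rightarrow> 'a set) \<Rightarrow> 'a list set" where
  "tup k V = {xs. length xs = k \<and> (\<forall>i<k. xs ! i \<in> V i)}"

lemma tup_Suc: "tup (Suc k) V = (\<lambda>(xs, v). xs @ [v]) ` (tup k V \<times> V k)"
proof
  show "tup (Suc k) V \<subseteq> (\<lambda>(xs, v). xs @ [v]) ` (tup k V \<times> V k)"
  proof
    fix xs assume xs: "xs \<in> tup (Suc k) V"
    then have l: "length xs = Suc k" "\<forall>i<Suc k. xs ! i \<in> V i" unfolding tup_def by auto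
    then have ne: "xs \<noteq> []" by auto
    have e: "xs = butlast xs @ [last xs]" using ne by simp
    have "butlast xs \<in> tup k V" using l unfolding tup_def by (auto simp: nth_butlast)
    moreover have "last xs \<in> V k" using l ne by (simp add: last_conv_nth)
    ultimately show "xs \<in> (\<lambda>(xs, v). xs @ [v]) ` (tup k V \<times> V k)"
      using e by (intro rev_image_eqI[of "(butlast xs, last xs)"]) auto
  qed
next
  show "(\<lambda>(xs, v). xs @ [v]) ` (tup k V \<times> V k) \<subseteq> tup (Suc k) V"
    unfolding tup_def by (auto simp: nth_append less_Suc_eq)
qed

lemma tup_card: "(\<forall>i<k. finite (V i) \<and> card (V i) = n) \<Longrightarrow> finite (tup k V) \<and> card (tup k V) \<le> n ^ k"
proof (induction k)
  case 0
  have "tup 0 V = {[]}" unfolding tup_def by auto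
  then show ?case by simp
next
  case (Suc k)
  then have IH: "finite (tup k V)" "card (tup k V) \<le> n ^ k" by auto
  have fV: "finite (V k)" "card (V k) = n" using Suc.prems by auto
  have "finite (tup (Suc k) V)" unfolding tup_Suc using IH fV by simp
  moreover have "card (tup (Suc k) V) \<le> card (tup k V \<times> V k)" unfolding tup_Suc
    by (rule card_image_le) (use IH fV in simp)
  moreover have "card (tup k V \<times> V k) \<le> n ^ Suc k" using IH fV by (simp add: card_cartesian_product mult.commute)
  ultimately show ?case by simp
qed

lemma K2I: "x \<noteq> y \<Longrightarrow> e \<in> H \<Longrightarrow> x \<in> set e \<Longrightarrow> y \<in> set e \<Longrightarrow> {x, y} \<in> K2 H"
  unfolding K2_def by blast

lemma main:
  fixes r n :: nat and c b :: real
  assumes r2: "r \<ge> 2" and c0: "c > 0" and bdef: "b = min (c / 2) (1 / (2 * real r * ln (real r)))"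
  shows "\<forall>(V :: nat \<Rightarrow> 'a set) (H :: 'a list set) (\<phi> :: 'a set \<Rightarrow> nat).
     partite_hypergraph (Suc k) V H \<longrightarrow>
     (\<forall>i<Suc k. finite (V i) \<and> card (V i) = n) \<longrightarrow>
     real (card H) \<ge> real (Suc k) * c * real n ^ Suc k \<longrightarrow>
     (\<forall>i<Suc k. \<forall>x\<in>V i. \<forall>y\<in>V i. x \<noteq> y \<longrightarrow> \<phi> {x, y} < r) \<longrightarrow>
     1 < b ^ Suc k * ln (real n) \<longrightarrow>
     (\<exists>m::nat. \<exists>S :: nat \<Rightarrow> 'a set. real m \<ge> b ^ Suc k * ln (real n) \<and>
           (\<forall>i<Suc k. S i \<subseteq> V i \<and> card (S i) = m) \<and>
           (\<forall>i<Suc k. \<exists>\<kappa>. \<forall>x\<in>S i. \<forall>y\<in>S i. x \<noteq> y \<longrightarrow> \<phi> {x, y} = \<kappa>) \<and>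
           covers H (Suc k) S m)"
proof -
  have lnr: "ln (real r) > 0" using r2 by simp
  have b0: "b > 0" using c0 lnr r2 unfolding bdef by simp
  have bc: "b \<le> c / 2" unfolding bdef by simp
  have br: "2 * real r * ln (real r) * b \<le> 1"
  proof -
    have "b \<le> 1 / (2 * real r * ln (real r))" unfolding bdef by simp
    moreover have "2 * real r * ln (real r) > 0" using lnr r2 by simp
    ultimately show ?thesis by (simp add: field_simps)
  qed
  show ?thesis
  proof (induction k)
    case 0
    show ?case
    proof (intro allI impI)
      fix V :: "nat \<Rightarrow> 'a set" and H :: "'a list set" and \<phi> :: "'a set \<Rightarrow> nat"
      assume P: "partite_hypergraph (Suc 0) V H"
        and fV: "\<forall>i<Suc 0. finite (V i) \<and> card (V i) = n"
        and cH: "real (card H) \<ge> real (Suc 0) * c * real n ^ Suc 0"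
        and col: "\<forall>i<Suc 0. \<forall>x\<in>V i. \<forall>y\<in>V i. x \<noteq> y \<longrightarrow> \<phi> {x, y} < r"
        and y1: "1 < b ^ Suc 0 * ln (real n)"
      define y where "y = b * ln (real n)"
      have y1': "1 < y" using y1 unfolding y_def by simp
      have n0: "n > 0" using y1' unfolding y_def by (cases "n = 0") auto
      define s where "s = nat \<lceil>y\<rceil>"
      have sy: "real s \<ge> y" "real s - 1 < y" using y1' unfolding s_def by linarith+
      have s1: "s \<ge> 1" using sy y1' by linarith
      define X where "X = {v \<in> V 0. [v] \<in> H}"
      have fX: "finite X" using fV unfolding X_def by auto
      have HX: "H \<subseteq> (\<lambda>v. [v]) ` X"
      proof
        fix e assume e: "e \<in> H"
        then have "length e = 1" "e ! 0 \<in> V 0" using P unfolding partite_hypergraph_def by auto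
        then have "e = [e ! 0]" by (cases e) auto
        then show "e \<in> (\<lambda>v. [v]) ` X" using e \<open>e ! 0 \<in> V 0\<close> unfolding X_def
          by (metis (mono_tags, lifting) imageI mem_Collect_eq)
      qed
      have "card H \<le> card X" using card_image_le[OF fX, of "\<lambda>v. [v]"] card_mono[OF _ HX] fX by fastforce
      then have cX: "real (card X) \<ge> c * real n" using cH by simp
      have "real (r ^ (r * (s - 1))) \<le> c * real n"
        using num_base[OF r2 c0 b0 bc br _ s1 _ refl n0] y1' sy unfolding y_def by simp
      then have "r ^ (r * (s - 1)) \<le> card X" using cX by linarith
      moreover have colX: "\<forall>x\<in>X. \<forall>y\<in>X. x \<noteq> y \<longrightarrow> \<phi> {x, y} < r" using col unfolding X_def by auto
      ultimately have "\<exists>T\<subseteq>X. card T = s - 1 + 1 \<and> (\<exists>k. \<forall>x\<in>T. \<forall>y\<in>T. x \<noteq> y \<longrightarrow> \<phi> {x, y} = k)"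
        by (rule ramsey[OF r2 fX])
      then obtain T \<kappa> where T: "T \<subseteq> X" "card T = s - 1 + 1"
        "\<forall>x\<in>T. \<forall>y\<in>T. x \<noteq> y \<longrightarrow> \<phi> {x, y} = \<kappa>"
        by blast
      have cT: "card T = s" using T(2) s1 by simp
      have fT: "finite T" using T(1) fX finite_subset by blast
      define D where "D = (\<lambda>v. [v]) ` T"
      have "covers H (Suc 0) (\<lambda>i. T) s"
        unfolding covers_def
      proof (intro conjI exI[of _ D])
        show "\<forall>i<Suc 0. \<forall>j<Suc 0. i \<noteq> j \<longrightarrow> (\<forall>x\<in>T. \<forall>y\<in>T. {x, y} \<in> K2 H)" by simp
        show "D \<subseteq> H" using T(1) unfolding D_def X_def by auto
        show "card D = s" unfolding D_def using cT by (simp add: card_image inj_on_def)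
        show "\<forall>e\<in>D. set e \<subseteq> (\<Union>i<Suc 0. T)" unfolding D_def by auto
        show "pairwise (\<lambda>e f. set e \<inter> set f = {}) D" unfolding D_def pairwise_def by auto
      qed
      moreover have "\<forall>i<Suc 0. T \<subseteq> V i \<and> card T = s" using T(1) cT unfolding X_def by auto
      ultimately show "\<exists>m S. b ^ Suc 0 * ln (real n) \<le> real m \<and>
           (\<forall>i<Suc 0. S i \<subseteq> V i \<and> card (S i) = m) \<and>
           (\<forall>i<Suc 0. \<exists>\<kappa>. \<forall>x\<in>S i. \<forall>y\<in>S i. x \<noteq> y \<longrightarrow> \<phi> {x, y} = \<kappa>) \<and>
           covers H (Suc 0) S m"
        using sy T(3) unfolding y_def by (intro exI[of _ s] exI[of _ "\<lambda>i. T"]) auto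
    qed
  next
    case (Suc k)
    define K where "K = Suc k"
    show ?case unfolding K_def[symmetric]
    proof (intro allI impI)
      fix V :: "nat \<Rightarrow> 'a set" and H :: "'a list set" and \<phi> :: "'a set \<Rightarrow> nat"
      assume P: "partite_hypergraph (Suc K) V H"
        and fV: "\<forall>i<Suc K. finite (V i) \<and> card (V i) = n"
        and cH: "real (card H) \<ge> real (Suc K) * c * real n ^ Suc K"
        and col: "\<forall>i<Suc K. \<forall>x\<in>V i. \<forall>y\<in>V i. x \<noteq> y \<longrightarrow> \<phi> {x, y} < r"
        and y1: "1 < b ^ Suc K * ln (real n)"
      have K1: "K \<ge> 1" unfolding K_def by simp
      define N where "N = ln (real n)"
      define y where "y = b ^ Suc K * N"
      have y1': "1 < y" using y1 unfolding y_def N_def by simp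
      have n0: "n > 0" using y1' unfolding y_def N_def by (cases "n = 0") auto
      have N0: "N > 0" using y1' b0 unfolding y_def
        by (metis mult_le_0_iff not_less less_eq_real_def order_less_trans zero_less_one zero_le_power)
      define s where "s = nat \<lceil>y\<rceil>"
      have sy: "real s \<ge> y" "real s - 1 < y" using y1' unfolding s_def by linarith+
      have s1: "s \<ge> 1" using sy y1' by linarith
      have disj: "\<forall>i<Suc K. \<forall>j<Suc K. i \<noteq> j \<longrightarrow> V i \<inter> V j = {}"
        and Htup: "H \<subseteq> tup (Suc K) V" using P unfolding partite_hypergraph_def tup_def by auto
      have ftup: "finite (tup (Suc K) V)" "card (tup (Suc K) V) \<le> n ^ Suc K" using tup_card[OF fV] by auto
      have ftupK: "finite (tup K V)" "card (tup K V) \<le> n ^ K" using tup_card[of K V n] fV by auto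
      have fH: "finite H" using Htup ftup(1) finite_subset by blast
      have "card H \<le> n ^ Suc K" using card_mono[OF ftup(1) Htup] ftup(2) by linarith
      then have "real (card H) \<le> real n ^ Suc K" by (metis of_nat_le_iff of_nat_power)
      then have "(real (Suc K) * c) * real n ^ Suc K \<le> 1 * real n ^ Suc K" using cH by simp
      moreover have "real n ^ Suc K > 0" using n0 by simp
      ultimately have "real (Suc K) * c \<le> 1" using mult_le_cancel_right_pos by blast
      moreover have "real (Suc K) \<ge> 2" using K1 by simp
      then have "2 * c \<le> real (Suc K) * c" using c0 by (intro mult_right_mono) auto
      ultimately have c2: "c \<le> 1/2" by linarith
      have b4: "b \<le> 1/4" using bc c2 by simp
      define Lk where "Lk xs = {v \<in> V K. xs @ [v] \<in> H}" for xs
      define H' where "H' = {xs \<in> tup K V. real (card (Lk xs)) \<ge> c * n}"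
      have H'tup: "H' \<subseteq> tup K V" unfolding H'_def by auto
      have fLk: "finite (Lk xs)" "card (Lk xs) \<le> n" for xs
        using fV card_mono[of "V K" "Lk xs"] unfolding Lk_def by auto
      have "H \<subseteq> (\<Union>xs\<in>tup K V. (\<lambda>v. xs @ [v]) ` Lk xs)"
      proof
        fix e assume e: "e \<in> H"
        then have "e \<in> (\<lambda>(xs, v). xs @ [v]) ` (tup K V \<times> V K)" using Htup tup_Suc by blast
        then obtain xs v where "xs \<in> tup K V" "v \<in> V K" "e = xs @ [v]" by auto
        then show "e \<in> (\<Union>xs\<in>tup K V. (\<lambda>v. xs @ [v]) ` Lk xs)" using e unfolding Lk_def by auto
      qed
      then have "card H \<le> card (\<Union>xs\<in>tup K V. (\<lambda>v. xs @ [v]) ` Lk xs)"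
        using ftupK(1) fLk by (intro card_mono) auto
      also have "\<dots> \<le> (\<Sum>xs\<in>tup K V. card ((\<lambda>v. xs @ [v]) ` Lk xs))" by (rule card_UN_le[OF ftupK(1)])
      also have "\<dots> \<le> (\<Sum>xs\<in>tup K V. card (Lk xs))" by (intro sum_mono card_image_le fLk)
      finally have "real (card H) \<le> real (\<Sum>xs\<in>tup K V. card (Lk xs))" by linarith
      also have "\<dots> = (\<Sum>xs\<in>tup K V. real (card (Lk xs)))" by simp
      also have "\<dots> \<le> (\<Sum>xs\<in>tup K V. (if xs \<in> H' then real n else 0) + c * n)"
      proof (intro sum_mono)
        fix xs assume xs: "xs \<in> tup K V"
        have "real (card (Lk xs)) \<le> real n" using fLk(2)[of xs] by simp
        moreover have "0 \<le> c * n" using c0 by simp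
        ultimately show "real (card (Lk xs)) \<le> (if xs \<in> H' then real n else 0) + c * n"
          using xs unfolding H'_def by auto
      qed
      also have "\<dots> = (\<Sum>xs\<in>tup K V. if xs \<in> H' then real n else 0) + card (tup K V) * (c * n)"
        by (simp add: sum.distrib)
      also have "(\<Sum>xs\<in>tup K V. if xs \<in> H' then real n else 0) = card H' * real n"
      proof -
        have "(\<Sum>xs\<in>tup K V. if xs \<in> H' then real n else 0) = (\<Sum>xs\<in>{xs\<in>tup K V. xs \<in> H'}. real n)"
          using sum.inter_filter[OF ftupK(1), of "\<lambda>_. real n" "\<lambda>xs. xs \<in> H'"] by simp
        also have "{xs\<in>tup K V. xs \<in> H'} = H'" using H'tup by auto
        finally show ?thesis by simp
      qed
      also have "real (card (tup K V)) * (c * n) \<le> real n ^ K * (c * n)"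
      proof (rule mult_right_mono)
        show "real (card (tup K V)) \<le> real n ^ K" using ftupK(2) by (metis of_nat_le_iff of_nat_power)
        show "0 \<le> c * real n" using c0 by simp
      qed
      finally have "real (Suc K) * c * real n ^ Suc K \<le> card H' * real n + real n ^ K * (c * n)"
        using cH by linarith
      then have "(real K * c * real n ^ K) * real n \<le> card H' * real n" by (simp add: algebra_simps)
      then have cH': "real (card H') \<ge> real K * c * real n ^ K" using n0 by simp
      have PH': "partite_hypergraph K V H'" using disj H'tup unfolding partite_hypergraph_def tup_def by auto
      have fV': "\<forall>i<K. finite (V i) \<and> card (V i) = n" using fV by auto
      have col': "\<forall>i<K. \<forall>x\<in>V i. \<forall>y\<in>V i. x \<noteq> y \<longrightarrow> \<phi> {x, y} < r"
      proof (intro allI impI ballI)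
        fix i x y assume "i < K" "x \<in> V i" "y \<in> V i" "x \<noteq> y"
        moreover have "i < Suc K" using \<open>i < K\<close> by simp
        ultimately show "\<phi> {x, y} < r" using col by blast
      qed
      have bK: "b ^ Suc K \<le> b ^ K" using b0 b4 by (simp add: power_decreasing)
      have y1K: "1 < b ^ K * N" using y1' bK N0 unfolding y_def by (smt (verit) mult_right_mono)
      note IH0 = spec[OF spec[OF spec[OF Suc.IH[unfolded K_def[symmetric]], of V], of H'], of \<phi>]
      note IH = mp[OF mp[OF mp[OF mp[OF mp[OF IH0 PH'] fV'] cH'] col'] y1K[unfolded N_def]]
      obtain m' S' where m': "b ^ K * ln (real n) \<le> real m'"
        and S'V: "\<forall>i<K. S' i \<subseteq> V i \<and> card (S' i) = m'"
        and S'mono: "\<forall>i<K. \<exists>\<kappa>. \<forall>x\<in>S' i. \<forall>y\<in>S' i. x \<noteq> y \<longrightarrow> \<phi> {x, y} = \<kappa>"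
        and cov': "covers H' K S' m'" using IH by blast
      from cov' obtain D' where D'K2: "\<forall>i<K. \<forall>j<K. i \<noteq> j \<longrightarrow> (\<forall>x\<in>S' i. \<forall>y\<in>S' j. {x, y} \<in> K2 H')"
        and D'H: "D' \<subseteq> H'" and cD': "card D' = m'" and D'S: "\<forall>e\<in>D'. set e \<subseteq> (\<Union>i<K. S' i)"
        and D'pw: "pairwise (\<lambda>e f. set e \<inter> set f = {}) D'" unfolding covers_def by blast
      have fD': "finite D'" using finite_subset[OF subset_trans[OF D'H H'tup] ftupK(1)] .
      have D'tup: "length a = K" "a ! i \<in> V i" if "a \<in> D'" "i < K" for a i
        using D'H H'tup that unfolding tup_def by auto
      have D'len: "length a = K" if "a \<in> D'" for a
        using D'H H'tup that unfolding tup_def by auto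
      have disjK: "V i \<inter> V K = {}" if "i < K" for i using disj that by simp
      have disjij: "V i \<inter> V j = {}" if "i < K" "j < K" "i \<noteq> j" for i j using disj that by simp
      have D'S': "a ! i \<in> S' i" if aD: "a \<in> D'" and iK: "i < K" for a i
      proof -
        have "a ! i \<in> set a" using D'len[OF aD] iK by simp
        then obtain j where j: "j < K" "a ! i \<in> S' j" using D'S aD by blast
        have "a ! i \<in> V j" using j S'V by blast
        moreover have "a ! i \<in> V i" using D'tup aD iK by auto
        ultimately have "i = j" using disjij[of i j] j(1) iK by blast
        then show ?thesis using j by simp
      qed
      have setD': "\<exists>i<K. z \<in> V i" if aD: "a \<in> D'" and zs: "z \<in> set a" for a z
      proof -
        obtain i where "i < length a" "z = a ! i" using zs by (metis in_set_conv_nth)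
        then show ?thesis using D'tup[OF aD] D'len[OF aD] by auto
      qed
      have notVK: "z \<notin> V K" if "a \<in> D'" "z \<in> set a" for a z
        using setD'[OF that] disjK by blast
      have K2sub: "K2 H' \<subseteq> K2 H"
      proof
        fix p assume "p \<in> K2 H'"
        then obtain x y e where p: "p = {x, y}" "x \<noteq> y" "e \<in> H'" "x \<in> set e" "y \<in> set e"
          unfolding K2_def by blast
        have "real (card (Lk e)) \<ge> c * n" using p(3) unfolding H'_def by auto
        moreover have "c * n > 0" using c0 n0 by simp
        ultimately have "Lk e \<noteq> {}" by auto
        then obtain v where "e @ [v] \<in> H" unfolding Lk_def by auto
        then have "{x, y} \<in> K2 H" using p by (intro K2I[of x y "e @ [v]"]) auto
        then show "p \<in> K2 H" using p(1) by simp
      qed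
      have bm: "y \<le> b * m'"
      proof -
        have "y = b * (b ^ K * N)" unfolding y_def by simp
        also have "\<dots> \<le> b * m'" using m' b0 unfolding N_def by (intro mult_left_mono) auto
        finally show ?thesis .
      qed
      have "b * m' \<le> c/2 * m'" using bc by (intro mult_right_mono) auto
      then have sc: "real s - 1 \<le> c/2 * m'" using bm sy by linarith
      have "b * m' \<le> 1/4 * m'" using b4 by (intro mult_right_mono) auto
      then have sm: "s \<le> m'" using bm sy y1' by linarith
      have M0: "m' > 0" using sm s1 by linarith
      have fVK: "finite (V K)" "card (V K) = n" using fV by auto
      have LkW: "\<forall>a\<in>D'. Lk a \<subseteq> V K" unfolding Lk_def by auto
      have cL: "\<forall>a\<in>D'. real (card (Lk a)) \<ge> c * n" using D'H unfolding H'_def by auto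
      obtain A X where A: "A \<subseteq> D'" "card A = s" and X: "X \<subseteq> V K" "\<forall>a\<in>A. X \<subseteq> Lk a"
        "real (card X) \<ge> (c/4)^(s+1) * n"
        using select[OF fD' cD' fVK LkW cL c0 sm sc M0] by blast
      have Bb: "b ^ K \<le> b" using power_decreasing[of 1 K b] K1 b0 b4 by simp
      have "real (r ^ (r * (s - 1))) \<le> (c/4)^(s+1) * real n"
        using num_step[OF r2 c0 c2 b0 bc br _ Bb _ s1 _ refl n0] b0 y1' sy unfolding y_def N_def by simp
      then have rX: "r ^ (r * (s - 1)) \<le> card X" using X(3) by linarith
      have fX: "finite X" using finite_subset[OF X(1) fVK(1)] .
      have colX: "\<forall>x\<in>X. \<forall>y\<in>X. x \<noteq> y \<longrightarrow> \<phi> {x, y} < r" using col X(1) by blast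
      have "\<exists>T\<subseteq>X. card T = s - 1 + 1 \<and> (\<exists>k. \<forall>x\<in>T. \<forall>y\<in>T. x \<noteq> y \<longrightarrow> \<phi> {x, y} = k)"
        by (rule ramsey[OF r2 fX rX colX])
      then obtain T \<kappa> where T: "T \<subseteq> X" "card T = s - 1 + 1"
        "\<forall>x\<in>T. \<forall>y\<in>T. x \<noteq> y \<longrightarrow> \<phi> {x, y} = \<kappa>" by blast
      have cT: "card T = s" using T(2) s1 by simp
      have fT: "finite T" using finite_subset[OF T(1) fX] .
      have fA: "finite A" using finite_subset[OF A(1) fD'] .
      obtain g where g: "bij_betw g A T" using finite_same_card_bij[OF fA fT] A(2) cT by auto
      have gT: "g a \<in> T" if "a \<in> A" for a using g that by (simp add: bij_betw_apply)
      have gL: "g a \<in> Lk a" if "a \<in> A" for a using gT[OF that] T(1) X(2) that by blast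
      have gH: "a @ [g a] \<in> H" if "a \<in> A" for a using gL[OF that] unfolding Lk_def by simp
      have gV: "g a \<in> V K" if "a \<in> A" for a using gL[OF that] unfolding Lk_def by simp
      have ginj: "inj_on g A" using g by (simp add: bij_betw_def)
      have AD: "a \<in> D'" if "a \<in> A" for a using A(1) that by blast
      have Adisj: "set a \<inter> set a' = {}" if "a \<in> A" "a' \<in> A" "a \<noteq> a'" for a a'
        using D'pw AD[OF that(1)] AD[OF that(2)] that(3) unfolding pairwise_def by blast
      have inji: "inj_on (\<lambda>a. a ! i) A" if "i < K" for i
      proof (rule inj_onI)
        fix a a' assume aa: "a \<in> A" "a' \<in> A" "a ! i = a' ! i"
        show "a = a'"
        proof (rule ccontr)
          assume "a \<noteq> a'"
          then have "set a \<inter> set a' = {}" using Adisj aa by blast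
          moreover have "a ! i \<in> set a" using D'len[OF AD[OF aa(1)]] that by simp
          moreover have "a' ! i \<in> set a'" using D'len[OF AD[OF aa(2)]] that by simp
          ultimately show False using aa(3) by auto
        qed
      qed
      define S where "S i = (if i < K then (\<lambda>a. a ! i) ` A else T)" for i
      define D where "D = (\<lambda>a. a @ [g a]) ` A"
      have G1: "b ^ Suc K * ln (real n) \<le> real s" using sy unfolding y_def N_def by simp
      have G2: "\<forall>i<Suc K. S i \<subseteq> V i \<and> card (S i) = s"
      proof (intro allI impI)
        fix i assume i: "i < Suc K"
        show "S i \<subseteq> V i \<and> card (S i) = s"
        proof (cases "i < K")
          case True
          have "S i \<subseteq> V i" unfolding S_def using True D'tup AD by auto
          moreover have "card (S i) = s" unfolding S_def using True card_image[OF inji[OF True]] A(2) by simp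
          ultimately show ?thesis by simp
        next
          case False
          then have "i = K" using i by simp
          then show ?thesis unfolding S_def using T(1) X(1) cT by auto
        qed
      qed
      have G3: "\<forall>i<Suc K. \<exists>\<kappa>. \<forall>x\<in>S i. \<forall>y\<in>S i. x \<noteq> y \<longrightarrow> \<phi> {x, y} = \<kappa>"
      proof (intro allI impI)
        fix i assume i: "i < Suc K"
        show "\<exists>\<kappa>. \<forall>x\<in>S i. \<forall>y\<in>S i. x \<noteq> y \<longrightarrow> \<phi> {x, y} = \<kappa>"
        proof (cases "i < K")
          case True
          then have sub: "S i \<subseteq> S' i" unfolding S_def using D'S' AD by auto
          obtain \<kappa>' where "\<forall>x\<in>S' i. \<forall>y\<in>S' i. x \<noteq> y \<longrightarrow> \<phi> {x, y} = \<kappa>'" using S'mono True by blast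
          then show ?thesis using sub by blast
        next
          case False
          then have "S i = T" unfolding S_def by simp
          then show ?thesis using T(3) by blast
        qed
      qed
      have cross: "{x, y} \<in> K2 H" if iK: "i < K" and xS: "x \<in> S i" and yS: "y \<in> S K" for i x y
      proof -
        obtain a where a: "a \<in> A" "x = a ! i" using iK xS unfolding S_def by auto
        have yT: "y \<in> T" using yS unfolding S_def by simp
        then have "y \<in> Lk a" using T(1) X(2) a(1) by blast
        then have H1: "a @ [y] \<in> H" "y \<in> V K" unfolding Lk_def by auto
        have xs: "x \<in> set a" using a D'len[OF AD[OF a(1)]] iK by simp
        have "x \<in> V i" using a D'tup[OF AD[OF a(1)] iK] by simp
        then have "x \<noteq> y" using H1(2) disjK[OF iK] by blast
        then show ?thesis using H1(1) xs by (intro K2I[of x y "a @ [y]"]) auto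
      qed
      have G4a: "\<forall>i<Suc K. \<forall>j<Suc K. i \<noteq> j \<longrightarrow> (\<forall>x\<in>S i. \<forall>y\<in>S j. {x, y} \<in> K2 H)"
      proof (intro allI impI ballI)
        fix i j x y assume ij: "i < Suc K" "j < Suc K" "i \<noteq> j" and xy: "x \<in> S i" "y \<in> S j"
        show "{x, y} \<in> K2 H"
        proof (cases "i < K")
          case iK: True
          show ?thesis
          proof (cases "j < K")
            case True
            have "x \<in> S' i" "y \<in> S' j" using xy iK True D'S' AD unfolding S_def by auto
            then show ?thesis using D'K2 iK True ij(3) K2sub by blast
          next
            case False
            then have "j = K" using ij by simp
            then show ?thesis using cross[OF iK xy(1)] xy(2) by simp
          qed
        next
          case False
          then have iK: "i = K" using ij by simp
          then have jK: "j < K" using ij by simp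
          have "{y, x} \<in> K2 H" using cross[OF jK xy(2)] xy(1) iK by simp
          then show ?thesis by (simp add: insert_commute)
        qed
      qed
      have DH: "D \<subseteq> H" unfolding D_def using gH by auto
      have injD: "inj_on (\<lambda>a. a @ [g a]) A"
      proof (rule inj_onI)
        fix a a' assume aa: "a \<in> A" "a' \<in> A" "a @ [g a] = a' @ [g a']"
        have "length a = length a'" using D'len AD aa(1,2) by simp
        then show "a = a'" using aa(3) by simp
      qed
      have cD: "card D = s" unfolding D_def using card_image[OF injD] A(2) by simp
      have DS: "\<forall>e\<in>D. set e \<subseteq> (\<Union>i<Suc K. S i)"
      proof
        fix e assume "e \<in> D"
        then obtain a where a: "a \<in> A" "e = a @ [g a]" unfolding D_def by auto
        have "set a \<subseteq> (\<Union>i<Suc K. S i)"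
        proof
          fix z assume "z \<in> set a"
          then obtain i where "i < length a" "z = a ! i" by (metis in_set_conv_nth)
          moreover have "length a = K" using D'len AD a(1) by simp
          ultimately have "i < K" "z \<in> S i" unfolding S_def using a(1) by auto
          then show "z \<in> (\<Union>i<Suc K. S i)" by auto
        qed
        moreover have "g a \<in> S K" unfolding S_def using gT a(1) by simp
        ultimately show "set e \<subseteq> (\<Union>i<Suc K. S i)" using a(2) by auto
      qed
      have Dpw: "pairwise (\<lambda>e f. set e \<inter> set f = {}) D"
        unfolding D_def pairwise_def
      proof (intro ballI impI)
        fix e f assume e: "e \<in> (\<lambda>a. a @ [g a]) ` A" and f: "f \<in> (\<lambda>a. a @ [g a]) ` A" and ef: "e \<noteq> f"
        obtain a where a: "a \<in> A" "e = a @ [g a]" using e by auto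
        obtain a' where a': "a' \<in> A" "f = a' @ [g a']" using f by auto
        have ne: "a \<noteq> a'" using ef a a' by auto
        have d1: "set a \<inter> set a' = {}" using Adisj a(1) a'(1) ne by blast
        have d2: "g a \<noteq> g a'" using ginj a(1) a'(1) ne by (meson inj_on_def)
        have d3: "g a \<notin> set a'" using notVK[OF AD[OF a'(1)]] gV[OF a(1)] by blast
        have d4: "g a' \<notin> set a" using notVK[OF AD[OF a(1)]] gV[OF a'(1)] by blast
        show "set e \<inter> set f = {}" using a(2) a'(2) d1 d2 d3 d4 by auto
      qed
      have G4: "covers H (Suc K) S s" unfolding covers_def
        using G4a DH cD DS Dpw by blast
      show "\<exists>m S. b ^ Suc K * ln (real n) \<le> real m \<and>
           (\<forall>i<Suc K. S i \<subseteq> V i \<and> card (S i) = m) \<and>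
           (\<forall>i<Suc K. \<exists>\<kappa>. \<forall>x\<in>S i. \<forall>y\<in>S i. x \<noteq> y \<longrightarrow> \<phi> {x, y} = \<kappa>) \<and>
           covers H (Suc K) S m" using G1 G2 G3 G4 by blast
    qed
  qed
qed


theorem lemma3p1:
  fixes r l n :: nat and c :: real
    and V :: "nat \<Rightarrow> 'a set" and H :: "'a list set" and \<phi> :: "'a set \<Rightarrow> nat"
  assumes "r \<ge> 2" and "l \<ge> 1" and "c > 0"
    and "partite_hypergraph l V H"
    and "\<forall>i<l. finite (V i) \<and> card (V i) = n"
    and "real (card H) \<ge> real l * c * real n ^ l"
    and "\<forall>i<l. \<forall>x\<in>V i. \<forall>y\<in>V i. x \<noteq> y \<longrightarrow> \<phi> {x, y} < r"
  shows "\<exists>m::nat. \<exists>S :: nat \<Rightarrow> 'a set.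
           real m \<ge> (min (c / 2) (1 / (2 * real r * ln (real r)))) ^ l * ln (real n) \<and>
           (\<forall>i<l. S i \<subseteq> V i \<and> card (S i) = m) \<and>
           (\<forall>i<l. \<exists>k. \<forall>x\<in>S i. \<forall>y\<in>S i. x \<noteq> y \<longrightarrow> \<phi> {x, y} = k) \<and>
           covers H l S m"
proof -
  define b where "b = min (c / 2) (1 / (2 * real r * ln (real r)))"
  have "\<exists>m::nat. \<exists>S :: nat \<Rightarrow> 'a set.
           real m \<ge> b ^ l * ln (real n) \<and>
           (\<forall>i<l. S i \<subseteq> V i \<and> card (S i) = m) \<and>
           (\<forall>i<l. \<exists>k. \<forall>x\<in>S i. \<forall>y\<in>S i. x \<noteq> y \<longrightarrow> \<phi> {x, y} = k) \<and>
           covers H l S m"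
  proof (cases "b ^ l * ln (real n) \<le> 1")
    case small: True
    show ?thesis
    proof (cases "H = {}")
      case True
      then have "real l * c * real n ^ l \<le> 0" using assms(6) by simp
      moreover have "real l * c > 0" using assms(2,3) by simp
      ultimately have "real n ^ l \<le> 0"
      proof (rule_tac ccontr)
        assume a: "real l * c * real n ^ l \<le> 0" "real l * c > 0" "\<not> real n ^ l \<le> 0"
        have "real n ^ l \<ge> 0" by simp
        then have "real n ^ l > 0" using a(3) by linarith
        then have "(real l * c) * real n ^ l > 0" using a(2) by (rule mult_pos_pos[rotated])
        then show False using a(1) by simp
      qed
      then have "n = 0"
      proof (rule_tac ccontr)
        assume "real n ^ l \<le> 0" "n \<noteq> 0"
        moreover have "real n ^ l > 0" using \<open>n \<noteq> 0\<close> by simp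
        ultimately show False by linarith
      qed
      then have "covers H l (\<lambda>i. {}) 0" unfolding covers_def by auto
      moreover have "b ^ l * ln (real n) \<le> real (0::nat)" using \<open>n = 0\<close> by simp
      ultimately show ?thesis by (intro exI[of _ 0] exI[of _ "\<lambda>i. {}"]) auto
    next
      case False
      then obtain e where e: "e \<in> H" by blast
      have el: "length e = l" "\<forall>i<l. e ! i \<in> V i" using e assms(4) unfolding partite_hypergraph_def by auto
      have disj: "\<forall>i<l. \<forall>j<l. i \<noteq> j \<longrightarrow> V i \<inter> V j = {}" using assms(4) unfolding partite_hypergraph_def by auto
      have ne: "e ! i \<noteq> e ! j" if "i < l" "j < l" "i \<noteq> j" for i j
      proof -
        have "e ! i \<in> V i" "e ! j \<in> V j" using el(2) that by auto
        moreover have "V i \<inter> V j = {}" using disj that by simp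
        ultimately show ?thesis by auto
      qed
      have "\<forall>i<l. \<forall>j<l. i \<noteq> j \<longrightarrow> (\<forall>x\<in>{e ! i}. \<forall>y\<in>{e ! j}. {x, y} \<in> K2 H)"
      proof (intro allI impI ballI)
        fix i j x y assume "i < l" "j < l" "i \<noteq> j" "x \<in> {e ! i}" "y \<in> {e ! j}"
        then show "{x, y} \<in> K2 H" using ne[of i j] e el(1) by (intro K2I[of x y e]) auto
      qed
      moreover have "set e \<subseteq> (\<Union>i<l. {e ! i})"
      proof
        fix z assume "z \<in> set e"
        then obtain i where "i < length e" "z = e ! i" by (metis in_set_conv_nth)
        then show "z \<in> (\<Union>i<l. {e ! i})" using el(1) by auto
      qed
      ultimately have "covers H l (\<lambda>i. {e ! i}) 1" unfolding covers_def using e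
        by (intro conjI exI[of _ "{e}"]) auto
      moreover have "\<forall>i<l. {e ! i} \<subseteq> V i \<and> card {e ! i} = 1" using el by auto
      ultimately show ?thesis using small by (intro exI[of _ 1] exI[of _ "\<lambda>i. {e ! i}"]) auto
    qed
  next
    case False
    then have y1: "1 < b ^ l * ln (real n)" by simp
    obtain k where l: "l = Suc k" using assms(2) by (cases l) auto
    note M0 = main[OF assms(1) assms(3) b_def, of k n]
    note M1 = spec[OF spec[OF spec[OF M0, of V], of H], of \<phi>]
    note M2 = mp[OF mp[OF mp[OF mp[OF mp[OF M1]]]]]
    show ?thesis using M2 assms(4-7) y1 unfolding l by blast
  qed
  then show ?thesis unfolding b_def .
qed

end
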